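(* Let $(X,d)$ be a metric space such that $d(v,v')\le \pi/2$ for all $v,v'\in X$, and let $T\colon X\to X$ be a mapping. Then: (i) If $T$ is firmly vicinal, then $T$ is vicinal; if moreover $d(v,v')<\pi/2$ for all $v,v'\in X$, then $T$ is firmly spherically nonspreading. (ii) If $T$ is firmly vicinal and $\mathrm{Fix}(T)\neq\emptyset$, then $\cos d(Tx,x)\,\cos d(Tx,y)\ge \cos d(x,y)$ for all $x\in X$ and $y\in \mathrm{Fix}(T)$. (iii) If $T$ is vicinal and $\mathrm{Fix}(T)\ne\emptyset$, then $T$ is quasi-nonexpansive. (iv) If $d(v,v')<\pi/2$ for all $v,v'\in X$, $T$ is firmly vicinal and $\mathrm{Fix}(T)\neq\emptyset$, then $T$ is asymptotically regular.
   Context: $\mathrm{Fix}(T)=\{u\in X: Tu=u\}$. For $z\in X$ put $C_z=\cos d(Tz,z)$. $T$ is called vicinal if for all $x,y\in X$: $\bigl(C_x^2(1+C_y^2)+C_y^2(1+C_x^2)\bigr)\cos d(Tx,Ty)\ge C_x^2(1+C_y^2)\cos d(Tx,y)+C_y^2(1+C_x^2)\cos d(Ty,x)$. $T$ is called firmly vicinal if for all $x,y\in X$: $\bigl(C_x^2(1+C_y^2)C_y+C_y^2(1+C_x^2)C_x\bigr)\cos d(Tx,Ty)\ge C_x^2(1+C_y^2)\cos d(Tx,y)+C_y^2(1+C_x^2)\cos d(Ty,x)$. $T$ is firmly spherically nonspreading if $(C_x+C_y)\cos^2 d(Tx,Ty)\ge 2\cos d(Tx,y)\cos d(Ty,x)$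 for all $x,y\in X$. $T$ is quasi-nonexpansive if $\mathrm{Fix}(T)\neq\emptyset$ and $d(Tx,y)\le d(x,y)$ for all $x\in X$, $y\in\mathrm{Fix}(T)$. $T$ is asymptotically regular if $\lim_{n\to\infty} d(T^{n+1}x,T^nx)=0$ for every $x\in X$. *)

theory Defs
  imports "HOL-Analysis.Analysis"
begin

definition Fix :: "('a \<Rightarrow> 'a) \<Rightarrow> 'a set" where
  "Fix T = {u. T u = u}"

definition Cd :: "('a::metric_space \<Rightarrow> 'a) \<Rightarrow> 'a \<Rightarrow> real" where
  "Cd T z = cos (dist (T z) z)"

definition vicinal :: "('a::metric_space \<Rightarrow> 'a) \<Rightarrow> bool" where
  "vicinal T \<longleftrightarrow> (\<forall>x y.
     ((Cd T x)^2 * (1 + (Cd T y)^2) + (Cd T y)^2 * (1 + (Cd T x)^2)) * cos (dist (T x) (T y))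
     \<ge> (Cd T x)^2 * (1 + (Cd T y)^2) * cos (dist (T x) y)
       + (Cd T y)^2 * (1 + (Cd T x)^2) * cos (dist (T y) x))"

definition firmly_vicinal :: "('a::metric_space \<Rightarrow> 'a) \<Rightarrow> bool" where
  "firmly_vicinal T \<longleftrightarrow> (\<forall>x y.
     ((Cd T x)^2 * (1 + (Cd T y)^2) * Cd T y + (Cd T y)^2 * (1 + (Cd T x)^2) * Cd T x)
       * cos (dist (T x) (T y))
     \<ge> (Cd T x)^2 * (1 + (Cd T y)^2) * cos (dist (T x) y)
       + (Cd T y)^2 * (1 + (Cd T x)^2) * cos (dist (T y) x))"

definition firmly_spherically_nonspreading :: "('a::metric_space \<Rightarrow> 'a) \<Rightarrow> bool" where
  "firmly_spherically_nonspreading T \<longleftrightarrow> (\<forall>x y.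
     (Cd T x + Cd T y) * (cos (dist (T x) (T y)))^2
     \<ge> 2 * cos (dist (T x) y) * cos (dist (T y) x))"

definition quasi_nonexpansive :: "('a::metric_space \<Rightarrow> 'a) \<Rightarrow> bool" where
  "quasi_nonexpansive T \<longleftrightarrow> Fix T \<noteq> {} \<and>
     (\<forall>x y. y \<in> Fix T \<longrightarrow> dist (T x) y \<le> dist x y)"

definition asymptotically_regular :: "('a::metric_space \<Rightarrow> 'a) \<Rightarrow> bool" where
  "asymptotically_regular T \<longleftrightarrow>
     (\<forall>x. (\<lambda>n. dist ((T ^^ Suc n) x) ((T ^^ n) x)) \<longlonglongrightarrow> 0)"

end

theory Submission
  imports Defs
begin

lemma alg1:
  fixes A B a b c p q :: real
  assumes "0 \<le> A" "0 \<le> B" "0 \<le> a" "a \<le> 1" "0 \<le> b" "b \<le> 1" "0 \<le> c"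
    and h: "(A * b + B * a) * c \<ge> A * p + B * q"
  shows "(A + B) * c \<ge> A * p + B * q"
proof -
  have "A * b \<le> A" using assms by (simp add: mult_left_le)
  moreover have "B * a \<le> B" using assms by (simp add: mult_left_le)
  ultimately have "(A * b + B * a) * c \<le> (A + B) * c" using assms
    by (intro mult_right_mono) auto
  thus ?thesis using h by linarith
qed

lemma alg2:
  fixes a b c p q :: real
  assumes a0: "0 < a" and a1: "a \<le> 1" and b0: "0 < b" and b1: "b \<le> 1" and c0: "0 \<le> c"
    and p0: "0 \<le> p" and q0: "0 \<le> q"
    and h: "(a^2 * (1 + b^2) * b + b^2 * (1 + a^2) * a) * c
            \<ge> a^2 * (1 + b^2) * p + b^2 * (1 + a^2) * q"
  shows "(a + b) * c^2 \<ge> 2 * p * q"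
proof -
  define A where "A = a^2 * (1 + b^2)"
  define B where "B = b^2 * (1 + a^2)"
  define D where "D = A * b + B * a"
  have A0: "A > 0" unfolding A_def using a0 by (intro mult_pos_pos) (auto simp: add_pos_nonneg)
  have B0: "B > 0" unfolding B_def using b0 by (intro mult_pos_pos) (auto simp: add_pos_nonneg)
  have D0: "D > 0" using A0 B0 a0 b0 by (simp add: D_def add_pos_pos)
  have h': "D * c \<ge> A * p + B * q" using h by (simp add: A_def B_def D_def)
  have "A * p + B * q \<ge> 0" using A0 B0 p0 q0 by simp
  hence "(D * c)^2 \<ge> (A * p + B * q)^2" using h' by (intro power_mono) auto
  moreover have "(A * p + B * q)^2 \<ge> 4 * A * B * p * q"
  proof -
    have "(A * p + B * q)^2 - 4 * A * B * p * q = (A * p - B * q)^2" by algebra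
    thus ?thesis by (metis diff_ge_0_iff_ge zero_le_power2)
  qed
  ultimately have E1: "D^2 * c^2 \<ge> 4 * A * B * p * q" by (simp add: power_mult_distrib)
  have Deq: "D = a * b * (a + b) * (1 + a * b)" by (simp add: D_def A_def B_def power2_eq_square algebra_simps)
  have k1: "(1 + a*b)^2 \<le> (1 + a^2) * (1 + b^2)"
  proof -
    have "(1 + a^2) * (1 + b^2) - (1 + a*b)^2 = (a - b)^2" by algebra
    thus ?thesis by (metis diff_ge_0_iff_ge zero_le_power2)
  qed
  have k2: "(a + b) * (1 + a*b)^2 \<le> 2 * ((1 + a^2) * (1 + b^2))"
  proof -
    have "(a + b) * (1 + a*b)^2 \<le> 2 * (1 + a*b)^2" using a1 b1 by (intro mult_right_mono) auto
    also have "\<dots> \<le> 2 * ((1 + a^2) * (1 + b^2))" using k1 by simp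
    finally show ?thesis .
  qed
  have E2: "D^2 \<le> 2 * (a + b) * A * B"
  proof -
    have "D^2 = (a*b)^2 * (a+b) * ((a + b) * (1 + a*b)^2)" by (simp add: Deq power2_eq_square algebra_simps)
    also have "\<dots> \<le> (a*b)^2 * (a+b) * (2 * ((1 + a^2) * (1 + b^2)))"
      using k2 a0 b0 by (intro mult_left_mono) auto
    also have "\<dots> = 2 * (a + b) * A * B" by (simp add: A_def B_def power2_eq_square algebra_simps)
    finally show ?thesis .
  qed
  have "D^2 * ((a + b) * c^2) \<ge> D^2 * (2 * p * q)"
  proof -
    have "D^2 * ((a + b) * c^2) = (a+b) * (D^2 * c^2)" by simp
    also have "\<dots> \<ge> (a+b) * (4 * A * B * p * q)" using E1 a0 b0 by (intro mult_left_mono) auto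
    finally have 1: "D^2 * ((a + b) * c^2) \<ge> (a+b) * (4 * A * B * p * q)" .
    have "(a+b) * (4 * A * B * p * q) = (2 * (a + b) * A * B) * (2 * p * q)" by simp
    also have "\<dots> \<ge> D^2 * (2 * p * q)" using E2 p0 q0 by (intro mult_right_mono) auto
    finally show ?thesis using 1 by linarith
  qed
  thus ?thesis using D0 by (simp add: mult_le_cancel_left)
qed

theorem lemma3p2:
  fixes T :: "'a::metric_space \<Rightarrow> 'a"
  assumes diam: "\<forall>v v' :: 'a. dist v v' \<le> pi / 2"
  shows "(firmly_vicinal T \<longrightarrow> vicinal T)
    \<and> (firmly_vicinal T \<and> (\<forall>v v' :: 'a. dist v v' < pi / 2) \<longrightarrow> firmly_spherically_nonspreading T)
    \<and> (firmly_vicinal T \<and> Fix T \<noteq> {} \<longrightarrow>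
         (\<forall>x y. y \<in> Fix T \<longrightarrow> cos (dist (T x) x) * cos (dist (T x) y) \<ge> cos (dist x y)))
    \<and> (vicinal T \<and> Fix T \<noteq> {} \<longrightarrow> quasi_nonexpansive T)
    \<and> ((\<forall>v v' :: 'a. dist v v' < pi / 2) \<and> firmly_vicinal T \<and> Fix T \<noteq> {} \<longrightarrow> asymptotically_regular T)"
proof -
  have cge: "0 \<le> cos (dist u v)" for u v :: 'a
    using diam by (intro cos_ge_zero) (auto intro: order_trans[of _ 0])
  have dpi: "dist u v \<le> pi" for u v :: 'a
    using diam[rule_format, of u v] pi_gt_zero by linarith
  have cle: "cos (dist u v) \<le> 1" for u v :: 'a by simp
  have P1: "firmly_vicinal T \<longrightarrow> vicinal T"
  proof
    assume fv: "firmly_vicinal T"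
    show "vicinal T" unfolding vicinal_def
    proof (intro allI)
      fix x y
      show "((Cd T x)^2 * (1 + (Cd T y)^2) + (Cd T y)^2 * (1 + (Cd T x)^2)) * cos (dist (T x) (T y))
     \<ge> (Cd T x)^2 * (1 + (Cd T y)^2) * cos (dist (T x) y)
       + (Cd T y)^2 * (1 + (Cd T x)^2) * cos (dist (T y) x)"
        using fv[unfolded firmly_vicinal_def, rule_format, of x y]
        by (intro alg1) (auto simp: Cd_def cge)
    qed
  qed
  have P2: "firmly_vicinal T \<and> (\<forall>v v' :: 'a. dist v v' < pi / 2) \<longrightarrow> firmly_spherically_nonspreading T"
  proof
    assume H: "firmly_vicinal T \<and> (\<forall>v v' :: 'a. dist v v' < pi / 2)"
    have cgt: "0 < cos (dist u v)" for u v :: 'a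
      using H by (intro cos_gt_zero_pi) (auto intro: less_le_trans[of _ 0])
    show "firmly_spherically_nonspreading T" unfolding firmly_spherically_nonspreading_def
    proof (intro allI)
      fix x y
      show "(Cd T x + Cd T y) * (cos (dist (T x) (T y)))^2
     \<ge> 2 * cos (dist (T x) y) * cos (dist (T y) x)"
        using H[THEN conjunct1, unfolded firmly_vicinal_def, rule_format, of x y]
        by (intro alg2) (auto simp: Cd_def cge cgt)
    qed
  qed
  have P3: "firmly_vicinal T \<Longrightarrow> y \<in> Fix T \<Longrightarrow> cos (dist (T x) x) * cos (dist (T x) y) \<ge> cos (dist x y)" for x y
  proof -
    assume fv: "firmly_vicinal T" and y: "y \<in> Fix T"
    have Ty: "T y = y" using y by (simp add: Fix_def)
    define a where "a = cos (dist (T x) x)"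
    have h: "(a^2 * 2 * 1 + 1 * (1 + a^2) * a) * cos (dist (T x) y)
      \<ge> a^2 * 2 * cos (dist (T x) y) + 1 * (1 + a^2) * cos (dist y x)"
      using fv[unfolded firmly_vicinal_def, rule_format, of x y]
      by (simp add: Cd_def Ty a_def[symmetric])
    hence "(1 + a^2) * (a * cos (dist (T x) y)) \<ge> (1 + a^2) * cos (dist x y)"
      by (simp add: algebra_simps dist_commute)
    moreover have "1 + a^2 > 0" by (simp add: add_pos_nonneg)
    ultimately show ?thesis by (simp add: a_def mult_le_cancel_left)
  qed
  have P4: "vicinal T \<and> Fix T \<noteq> {} \<longrightarrow> quasi_nonexpansive T"
  proof
    assume H: "vicinal T \<and> Fix T \<noteq> {}"
    have "dist (T x) y \<le> dist x y" if y: "y \<in> Fix T" for x y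
    proof -
      have Ty: "T y = y" using y by (simp add: Fix_def)
      define a where "a = cos (dist (T x) x)"
      have h: "(a^2 * 2 + 1 * (1 + a^2)) * cos (dist (T x) y)
        \<ge> a^2 * 2 * cos (dist (T x) y) + 1 * (1 + a^2) * cos (dist y x)"
        using H[THEN conjunct1, unfolded vicinal_def, rule_format, of x y]
        by (simp add: Cd_def Ty a_def[symmetric])
      hence "(1 + a^2) * cos (dist (T x) y) \<ge> (1 + a^2) * cos (dist x y)"
        by (simp add: algebra_simps dist_commute)
      moreover have "1 + a^2 > 0" by (simp add: add_pos_nonneg)
      ultimately have "cos (dist (T x) y) \<ge> cos (dist x y)" by (simp add: mult_le_cancel_left)
      moreover have "dist (T x) y \<le> pi" "dist x y \<le> pi" using dpi by auto
      ultimately show ?thesis by (simp add: cos_mono_le_eq)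
    qed
    thus "quasi_nonexpansive T" using H by (auto simp: quasi_nonexpansive_def)
  qed
  have P5: "(\<forall>v v' :: 'a. dist v v' < pi / 2) \<and> firmly_vicinal T \<and> Fix T \<noteq> {} \<longrightarrow> asymptotically_regular T"
  proof
    assume H: "(\<forall>v v' :: 'a. dist v v' < pi / 2) \<and> firmly_vicinal T \<and> Fix T \<noteq> {}"
    have cgt: "0 < cos (dist u v)" for u v :: 'a
      using H by (intro cos_gt_zero_pi) (auto intro: less_le_trans[of _ 0])
    obtain y where y: "y \<in> Fix T" using H by auto
    show "asymptotically_regular T" unfolding asymptotically_regular_def
    proof
      fix x
      define s where "s n = cos (dist ((T ^^ n) x) y)" for n
      define c where "c n = cos (dist ((T ^^ Suc n) x) ((T ^^ n) x))" for n
      have key: "c n * s (Suc n) \<ge> s n" for n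
        using P3[OF H[THEN conjunct2, THEN conjunct1] y, of "(T ^^ n) x"]
        by (simp add: c_def s_def)
      have spos: "s n > 0" for n by (simp add: s_def cgt)
      have cpos: "c n > 0" for n by (simp add: c_def cgt)
      have c1: "c n \<le> 1" for n by (simp add: c_def)
      have inc: "incseq s"
      proof (rule incseq_SucI)
        fix n
        have "c n * s (Suc n) \<le> s (Suc n)" using c1 spos
          by (simp add: mult_left_le_one_le less_imp_le)
        thus "s n \<le> s (Suc n)" using key[of n] by linarith
      qed
      have bdd: "s n \<le> 1" for n by (simp add: s_def)
      obtain L where L: "s \<longlonglongrightarrow> L" and L0': "\<forall>i. s i \<le> L"
        using incseq_convergent[OF inc, of 1] bdd by blast
      have L0: "L \<ge> s 0" using L0' by blast
      hence Lpos: "L > 0" using spos[of 0] by linarith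
      have "(\<lambda>n. s n / s (Suc n)) \<longlonglongrightarrow> L / L"
        using L LIMSEQ_Suc[OF L] Lpos by (intro tendsto_divide) auto
      hence lim1: "(\<lambda>n. s n / s (Suc n)) \<longlonglongrightarrow> 1" using Lpos by simp
      have lower: "s n / s (Suc n) \<le> c n" for n
        using key[of n] spos[of "Suc n"] by (simp add: divide_le_eq)
      have climit: "c \<longlonglongrightarrow> 1"
        by (rule tendsto_sandwich[OF _ _ lim1 tendsto_const[of 1]])
           (auto intro: lower c1 always_eventually)
      have "(\<lambda>n. arccos (c n)) \<longlonglongrightarrow> arccos 1"
        by (rule continuous_on_tendsto_compose[OF continuous_on_arccos' climit])
           (auto intro!: always_eventually simp: less_imp_le[OF cpos] c1
              order_trans[OF _ less_imp_le[OF cpos]])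
      moreover have "arccos (c n) = dist ((T ^^ Suc n) x) ((T ^^ n) x)" for n
      proof -
        have "dist ((T ^^ Suc n) x) ((T ^^ n) x) \<le> pi" using dpi by auto
        thus ?thesis by (simp add: c_def arccos_cos)
      qed
      ultimately show "(\<lambda>n. dist ((T ^^ Suc n) x) ((T ^^ n) x)) \<longlonglongrightarrow> 0" by simp
    qed
  qed
  show ?thesis using P1 P2 P3 P4 P5 by blast
qed

end
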